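(* Let $\alpha=2\sqrt7-4$. Fix $\varepsilon>0$ and let $\delta=3\varepsilon/8$. For every balanced tetrahedral erasure channel $W$ with $Q(W)\le\alpha-\varepsilon$, we have $Q(W^{s})\ge Q(W)\bigl(1+H(W)\delta\bigr)$ and $Q(W^{p})\ge Q(W)\bigl(1+(1-H(W))\delta\bigr)$.
   Context: $\mathrm{TEC}(p,q,r,s,t)$ denotes a tetrahedral erasure channel with parameters $p,q,r,s,t\ge0$ summing to $1$. Its entropy is $H=\frac{q+r+s}{2}+t$, its edge mass is $E=q+r+s$, and its Quetelet index is $Q=E/(H(1-H))$ (defined when $0<H<1$). It is balanced if $q=r=s$. For $W=\mathrm{TEC}(p,q,r,s,t)$, the serial child is $W^{s}=\mathrm{TEC}(p^2,\ ps+sq+qp,\ pq+qr+rp,\ pr+rs+sp,\ 1-\text{(sum of the other four)})$ and the parallel child is $W^{p}=\mathrm{TEC}(1-\text{(sum of the other four)},\ ts+sq+qt,\ tq+qr+rt,\ tr+rs+st,\ t^2)$. *)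

theory Defs
  imports Complex_Main
begin

type_synonym tec = "real \<times> real \<times> real \<times> real \<times> real"

definition is_tec :: "tec \<Rightarrow> bool" where
  "is_tec W = (case W of (p,q,r,s,t) \<Rightarrow>
     p \<ge> 0 \<and> q \<ge> 0 \<and> r \<ge> 0 \<and> s \<ge> 0 \<and> t \<ge> 0 \<and> p + q + r + s + t = 1)"

definition tec_H :: "tec \<Rightarrow> real" where
  "tec_H W = (case W of (p,q,r,s,t) \<Rightarrow> (q + r + s) / 2 + t)"

definition tec_E :: "tec \<Rightarrow> real" where
  "tec_E W = (case W of (p,q,r,s,t) \<Rightarrow> q + r + s)"

text \<open>Quetelet index; only meaningful when 0 < H < 1.\<close>
definition tec_Q :: "tec \<Rightarrow> real" where
  "tec_Q W = tec_E W / (tec_H W * (1 - tec_H W))"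

definition balanced :: "tec \<Rightarrow> bool" where
  "balanced W = (case W of (p,q,r,s,t) \<Rightarrow> q = r \<and> r = s)"

definition serial :: "tec \<Rightarrow> tec" where
  "serial W = (case W of (p,q,r,s,t) \<Rightarrow>
     (let p' = p^2; q' = p*s + s*q + q*p; r' = p*q + q*r + r*p; s' = p*r + r*s + s*p
      in (p', q', r', s', 1 - (p' + q' + r' + s'))))"

definition parallel :: "tec \<Rightarrow> tec" where
  "parallel W = (case W of (p,q,r,s,t) \<Rightarrow>
     (let q' = t*s + s*q + q*t; r' = t*q + q*r + r*t; s' = t*r + r*s + s*t; t' = t^2
      in (1 - (q' + r' + s' + t'), q', r', s', t')))"

end

theory Submission
  imports Defs
begin
lemma core:
  fixes h Q A :: real
  assumes A: "A^2 + 8*A = 12" "1 < A" "A < 2" and h: "0 < h" "h < 1" and Q: "0 \<le> Q" "Q \<le> A"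
  shows "(1 - (1-h)^2*(1 - (Q*h)^2/12)) * (1 - (Q*h)^2/12) * (1 + 3/8*h*(A-Q)) \<le> 2*h*(1 - Q*h/3)"
proof -
  define d where "d = A - Q"
  have d: "0 \<le> d" "d \<le> A" using Q d_def by auto
  have eq: "2*h*(1 - Q*h/3) - (1 - (1-h)^2*(1 - (Q*h)^2/12)) * (1 - (Q*h)^2/12) * (1 + 3/8*h*(A-Q))
     = h^2 * ( d*(Q+A-1)/12 + (12 - 8*A - A^2)/12 + 3/8*d*h
        + Q^2*h*((1/3 - h/6) + d*(1/2-(h-1)^2)/16)
        + Q^4*h^2*(1-h)^2/144 + d*Q^4*h^3*(1-h)^2/384)"
    unfolding d_def by (simp add: field_simps power2_eq_square power4_eq_xxxx) algebra
  have t1: "d*(Q+A-1)/12 \<ge> 0" using d Q A by simp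
  have t0: "(12 - 8*A - A^2)/12 = 0" using A by simp
  have t2: "3/8*d*h \<ge> 0" using d h by simp
  have b: "(h-1)^2 \<le> 1"
  proof -
    have "(h-1)^2 = (1-h)*(1-h)" by (simp add: power2_eq_square algebra_simps)
    also have "\<dots> \<le> 1*1" using h by (intro mult_mono) auto
    finally show ?thesis by simp
  qed
  have b2: "d*(1/2-(h-1)^2)/16 \<ge> - d/32"
    proof -
    have "d*(-1/2) \<le> d*(1/2-(h-1)^2)" using b d by (intro mult_left_mono) auto
    then show ?thesis by linarith
  qed
  have b3: "(1/3 - h/6) + d*(1/2-(h-1)^2)/16 \<ge> 0" using b2 h d A by linarith
  have t3: "Q^2*h*((1/3 - h/6) + d*(1/2-(h-1)^2)/16) \<ge> 0" using b3 h by simp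
  have t4: "Q^4*h^2*(1-h)^2/144 \<ge> 0" by simp
  have t5: "d*Q^4*h^3*(1-h)^2/384 \<ge> 0" using d h by simp
  have "2*h*(1 - Q*h/3) - (1 - (1-h)^2*(1 - (Q*h)^2/12)) * (1 - (Q*h)^2/12) * (1 + 3/8*h*(A-Q)) \<ge> 0"
    unfolding eq using t0 t1 t2 t3 t4 t5 by (intro mult_nonneg_nonneg) auto
  then show ?thesis by linarith
qed
lemma serial_ineq:
  fixes p a t \<epsilon> :: real
  assumes e: "\<epsilon> > 0" and nn: "p \<ge> 0" "a \<ge> 0" "t \<ge> 0" and sum1: "p + 3*a + t = 1"
    and H0: "0 < tec_H (p,a,a,a,t)" and H1: "tec_H (p,a,a,a,t) < 1"
    and Qle: "tec_Q (p,a,a,a,t) \<le> (2 * sqrt 7 - 4) - \<epsilon>"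
  shows "tec_Q (serial (p,a,a,a,t)) \<ge> tec_Q (p,a,a,a,t) * (1 + tec_H (p,a,a,a,t) * (3 * \<epsilon> / 8))"
proof -
  define A where "A = 2 * sqrt 7 - 4"
  have s7: "sqrt 7 ^ 2 = 7" by simp
  have s7a: "sqrt 7 > 5/2"
  proof (rule ccontr)
    assume "\<not> sqrt 7 > 5/2"
    then have "sqrt 7 * sqrt 7 \<le> 5/2 * (5/2)" by (intro mult_mono) auto
    then show False by simp
  qed
  have s7b: "sqrt 7 < 3"
  proof (rule ccontr)
    assume "\<not> sqrt 7 < 3"
    then have "3 * 3 \<le> sqrt 7 * sqrt 7" by (intro mult_mono) auto
    then show False by simp
  qed
  have A1: "A^2 + 8*A = 12" unfolding A_def using s7 by (simp add: power2_eq_square algebra_simps)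
  have A2: "1 < A" "A < 2" unfolding A_def using s7a s7b by auto
  define h where "h = 3*a/2 + t"
  define u where "u = 1 - h"
  define Q where "Q = 3*a / (h*u)"
  have hH: "tec_H (p,a,a,a,t) = h" unfolding h_def tec_H_def by simp
  have hQ: "tec_Q (p,a,a,a,t) = Q" unfolding Q_def tec_Q_def tec_E_def hH u_def by simp
  have h: "0 < h" "h < 1" using H0 H1 hH by auto
  have u: "0 < u" "u < 1" using h u_def by auto
  have hu: "h*u > 0" using h u by simp
  have Q0: "Q \<ge> 0" unfolding Q_def using nn hu by simp
  have QA: "Q \<le> A - \<epsilon>" using Qle hQ A_def by simp
  have a_eq: "a = Q*h*u/3" unfolding Q_def using hu h u by (simp add: field_simps)
  have p_eq: "p = u - Q*h*u/2" using sum1 a_eq unfolding u_def h_def by (simp add: field_simps)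
  define c where "c = 1 - (Q*h)^2/12"
  have "Q*h \<le> Q*1" using Q0 h by (intro mult_left_mono) auto
  then have Qh: "Q*h < 2" using QA A2 e by simp
  have Qh0: "Q*h \<ge> 0" using Q0 h by simp
  have "(Q*h)^2 < 2^2" using Qh Qh0 by (intro power_strict_mono) auto
  then have c0: "0 < c" "c \<le> 1" unfolding c_def by auto
  have "u^2 < 1^2" using u by (intro power_strict_mono) auto
  then have u2: "u^2 < 1" by simp
  have "u^2*c \<le> u^2*1" using c0 by (intro mult_left_mono) auto
  then have ucl: "u^2*c < 1" using u2 by simp
  have ucp: "u^2*c > 0" using u c0 by simp
  define E' where "E' = 2*Q*h*u^2*(1 - Q*h/3)"
  have Es: "tec_E (serial (p,a,a,a,t)) = E'" unfolding serial_def tec_E_def Let_def E'_def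
    by (simp add: a_eq p_eq field_simps power2_eq_square)
  have Hs: "tec_H (serial (p,a,a,a,t)) = 1 - u^2*c" unfolding serial_def tec_H_def Let_def c_def
    by (simp add: a_eq p_eq field_simps power2_eq_square)
  have Qs: "tec_Q (serial (p,a,a,a,t)) = E' / ((1 - u^2*c) * (u^2*c))"
    unfolding tec_Q_def Es Hs by simp
  have D0: "(1 - u^2*c) * (u^2*c) > 0" using ucl ucp by simp
  have cr: "(1 - (1-h)^2*c) * c * (1 + 3/8*h*(A-Q)) \<le> 2*h*(1 - Q*h/3)"
    unfolding c_def using core[OF A1 A2 h Q0] QA e by linarith
  have st1: "Q * (1 + h * (3 * \<epsilon> / 8)) \<le> Q * (1 + 3/8*h*(A-Q))"
  proof -
    have "h*\<epsilon> \<le> h*(A-Q)" using QA h by (intro mult_left_mono) auto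
    then have "1 + h * (3 * \<epsilon> / 8) \<le> 1 + 3/8*h*(A-Q)" by (simp add: mult.commute)
    then show ?thesis using Q0 by (intro mult_left_mono) auto
  qed
  have st2: "Q * (1 + 3/8*h*(A-Q)) * ((1 - u^2*c) * (u^2*c)) \<le> E'"
  proof -
    have "Q*u^2*((1 - (1-h)^2*c) * c * (1 + 3/8*h*(A-Q))) \<le> Q*u^2*(2*h*(1 - Q*h/3))"
      using cr Q0 by (intro mult_left_mono) auto
    then show ?thesis unfolding E'_def u_def by (simp add: algebra_simps)
  qed
  have "Q * (1 + h * (3 * \<epsilon> / 8)) \<le> E' / ((1 - u^2*c) * (u^2*c))"
    proof -
    have "Q * (1 + h * (3 * \<epsilon> / 8)) * ((1 - u^2*c) * (u^2*c)) \<le> Q * (1 + 3/8*h*(A-Q)) * ((1 - u^2*c) * (u^2*c))"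
      using st1 D0 by (intro mult_right_mono) auto
    then show ?thesis using st2 D0 by (simp add: pos_le_divide_eq)
  qed
  then show ?thesis unfolding Qs hQ hH .
qed
theorem mainTheorem6:
  fixes W :: tec and \<epsilon> :: real
  assumes "\<epsilon> > 0"
    and "is_tec W" and "balanced W"
    and "0 < tec_H W" and "tec_H W < 1"
    and "tec_Q W \<le> (2 * sqrt 7 - 4) - \<epsilon>"
  shows "tec_Q (serial W) \<ge> tec_Q W * (1 + tec_H W * (3 * \<epsilon> / 8))
       \<and> tec_Q (parallel W) \<ge> tec_Q W * (1 + (1 - tec_H W) * (3 * \<epsilon> / 8))"
proof -
  obtain p q r s t where W: "W = (p,q,r,s,t)" by (cases W) auto
  have qrs: "r = q" "s = q" using assms(3) W unfolding balanced_def by auto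
  have nn: "p \<ge> 0" "q \<ge> 0" "t \<ge> 0" and sum1: "p + 3*q + t = 1"
    using assms(2) W qrs unfolding is_tec_def by auto
  have W': "W = (p,q,q,q,t)" using W qrs by simp
  have ser: "tec_Q (serial W) \<ge> tec_Q W * (1 + tec_H W * (3 * \<epsilon> / 8))"
    unfolding W' by (rule serial_ineq[OF assms(1) nn(1,2,3) sum1]) (use assms W' in auto)
  have HW: "tec_H (t,q,q,q,p) = 1 - tec_H W" unfolding W' tec_H_def using sum1 by simp
  have EW: "tec_E (t,q,q,q,p) = tec_E W" unfolding W' tec_E_def by simp
  have QW: "tec_Q (t,q,q,q,p) = tec_Q W" unfolding tec_Q_def HW EW by (simp add: mult.commute)
  have PW: "tec_Q (parallel W) = tec_Q (serial (t,q,q,q,p))"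
  proof -
    have pe: "p = 1 - t - 3*q" using sum1 by simp
    show ?thesis unfolding W' parallel_def serial_def tec_Q_def tec_H_def tec_E_def Let_def pe
      by (simp add: algebra_simps power2_eq_square)
  qed
  have "tec_Q (serial (t,q,q,q,p)) \<ge> tec_Q (t,q,q,q,p) * (1 + tec_H (t,q,q,q,p) * (3 * \<epsilon> / 8))"
    by (rule serial_ineq[OF assms(1) nn(3) nn(2) nn(1)]) (use assms sum1 HW QW in auto)
  then have par: "tec_Q (parallel W) \<ge> tec_Q W * (1 + (1 - tec_H W) * (3 * \<epsilon> / 8))"
    using PW HW QW by simp
  show ?thesis using ser par by blast
qed

end
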